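(* Under the role-persistence and uniform-bound assumptions below, for any two initial states $\mathbf x,\mathbf y\in\{0,1\}^n$, let $\Pr(\mathbf X^t\mid\mathbf x)$ and $\Pr(\mathbf Y^t\mid\mathbf y)$ be the laws at time $t$ of the time-varying failure process started from $\mathbf X^0=\mathbf x$ and $\mathbf Y^0=\mathbf y$, respectively. Then for every $t\in\mathbb N$, $$d_{TV}\big(\Pr(\mathbf X^t\mid\mathbf x),\Pr(\mathbf Y^t\mid\mathbf y)\big)\le n\,\|\mathbf M_{t-1}\mathbf M_{t-2}\cdots\mathbf M_0\|,$$ where $\mathbf M_s=\mathbf A_s\mathbf W_s$ (the empty product for $t=0$ being $\mathbf I$), and consequently $$d_{TV}\big(\Pr(\mathbf X^t\mid\mathbf x),\Pr(\mathbf Y^t\mid\mathbf y)\big)\le n\,\bar\alpha^{\lfloor t/2\rfloor}.$$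
   Context: Fix a finite node set $\mathcal V$ with $n=|\mathcal V|$ and a sequence of directed graphs $G_t=(\mathcal V,\mathcal E_t)$, $t\in\mathbb N$. Let $\delta^t_{\mathrm{in}}(i)=\{j:(j,i)\in\mathcal E_t\}$. In $G_t$, a node $i$ is a pure obligee if it has no outgoing edge in $\mathcal E_t$, and a principal otherwise. For each $t$, $\mathbf W_t=(w^t_{ij})$ is an entrywise nonnegative $n\times n$ matrix with $w^t_{ij}>0$ only if $(j,i)\in\mathcal E_t$ and with every row sum at most $1$; $\mathbf A_t=\mathrm{diag}(\alpha_i^t)$ with $\alpha_i^t\in[0,1]$, and $\alpha_i^t=1$ whenever $i$ is a pure obligee in $G_t$. Each node has a fixed risk score $r_i\in[0,1]$. The time-varying failure process started at $\mathbf X^0$: for $t\ge0$, conditionally on $(\mathbf X^0,\dots,\mathbf X^t)$ the $X_i^{t+1}$, $i\in\mathcal V$, are independent with $X_i^{t+1}\sim\mathrm{Bernoulli}\big((1-\alpha_i^t)r_i+\alpha_i^t\sum_{j\in\delta^t_{\mathrm{in}}(i)}w^t_{ij}X_j^t\big)$. Role persistence: for every $i$ and $t$, $i$ is a pure obligee in $G_t$ if and only if it is a pure obligee in $G_{t+1}$. Uniform bound: there is $\bar\alpha\in(0,1)$ with $\alpha_i^t\le\bar\alpha$ for every $t$ and every node $i$ that is not a pure obligee in $G_t$. $d_{TV}(P,Q)=\max_{S\subseteq\{0,1\}^n}|P(S)-Q(S)|$; $\|\mathbf M\|$ is the induced $\ell_\infty$ matrix norm (maximum absolute row sum). *)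

theory Defs
  imports "HOL-Probability.Probability"
begin

text \<open>Nodes form a finite type 'v; a state in {0,1}^n is a function 'v \<Rightarrow> bool.
  Edge (j,i) in E t means an edge from j to i in G_t.\<close>

definition in_nbrs :: "(nat \<Rightarrow> ('v \<times> 'v) set) \<Rightarrow> nat \<Rightarrow> 'v \<Rightarrow> 'v set" where
  "in_nbrs E t i = {j. (j, i) \<in> E t}"

definition pure_obligee :: "(nat \<Rightarrow> ('v \<times> 'v) set) \<Rightarrow> nat \<Rightarrow> 'v \<Rightarrow> bool" where
  "pure_obligee E t i \<longleftrightarrow> \<not> (\<exists>k. (i, k) \<in> E t)"

definition fail_prob ::
  "(nat \<Rightarrow> ('v \<times> 'v) set) \<Rightarrow> (nat \<Rightarrow> 'v \<Rightarrow> 'v \<Rightarrow> real) \<Rightarrow> (nat \<Rightarrow> 'v \<Rightarrow> real)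
    \<Rightarrow> ('v \<Rightarrow> real) \<Rightarrow> nat \<Rightarrow> ('v \<Rightarrow> bool) \<Rightarrow> 'v \<Rightarrow> real" where
  "fail_prob E W \<alpha> r t x i =
     (1 - \<alpha> t i) * r i + \<alpha> t i * (\<Sum>j\<in>in_nbrs E t i. W t i j * of_bool (x j))"

definition step_kernel ::
  "(nat \<Rightarrow> ('v::finite \<times> 'v) set) \<Rightarrow> (nat \<Rightarrow> 'v \<Rightarrow> 'v \<Rightarrow> real) \<Rightarrow> (nat \<Rightarrow> 'v \<Rightarrow> real)
    \<Rightarrow> ('v \<Rightarrow> real) \<Rightarrow> nat \<Rightarrow> ('v \<Rightarrow> bool) \<Rightarrow> ('v \<Rightarrow> bool) pmf" where
  "step_kernel E W \<alpha> r t x =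
     Pi_pmf UNIV False (\<lambda>i. bernoulli_pmf (fail_prob E W \<alpha> r t x i))"

fun law ::
  "(nat \<Rightarrow> ('v::finite \<times> 'v) set) \<Rightarrow> (nat \<Rightarrow> 'v \<Rightarrow> 'v \<Rightarrow> real) \<Rightarrow> (nat \<Rightarrow> 'v \<Rightarrow> real)
    \<Rightarrow> ('v \<Rightarrow> real) \<Rightarrow> ('v \<Rightarrow> bool) \<Rightarrow> nat \<Rightarrow> ('v \<Rightarrow> bool) pmf" where
  "law E W \<alpha> r x0 0 = return_pmf x0"
| "law E W \<alpha> r x0 (Suc t) = bind_pmf (law E W \<alpha> r x0 t) (step_kernel E W \<alpha> r t)"

definition dTV :: "('s::finite) pmf \<Rightarrow> 's pmf \<Rightarrow> real" where
  "dTV P Q = Max (range (\<lambda>S. \<bar>measure_pmf.prob P S - measure_pmf.prob Q S\<bar>))"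

definition mat_mult :: "('v::finite \<Rightarrow> 'v \<Rightarrow> real) \<Rightarrow> ('v \<Rightarrow> 'v \<Rightarrow> real) \<Rightarrow> 'v \<Rightarrow> 'v \<Rightarrow> real" where
  "mat_mult A B i k = (\<Sum>j\<in>UNIV. A i j * B j k)"

definition mat_id :: "'v \<Rightarrow> 'v \<Rightarrow> real" where
  "mat_id i j = (if i = j then 1 else 0)"

text \<open>Induced l-infinity norm: maximum absolute row sum.\<close>
definition inf_norm :: "('v::finite \<Rightarrow> 'v \<Rightarrow> real) \<Rightarrow> real" where
  "inf_norm A = Max (range (\<lambda>i. \<Sum>j\<in>UNIV. \<bar>A i j\<bar>))"

definition Mmat :: "(nat \<Rightarrow> 'v \<Rightarrow> 'v \<Rightarrow> real) \<Rightarrow> (nat \<Rightarrow> 'v \<Rightarrow> real) \<Rightarrow> nat \<Rightarrow> 'v \<Rightarrow> 'v \<Rightarrow> real" where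
  "Mmat W \<alpha> s i j = \<alpha> s i * W s i j"

fun Mprod :: "(nat \<Rightarrow> 'v::finite \<Rightarrow> 'v \<Rightarrow> real) \<Rightarrow> (nat \<Rightarrow> 'v \<Rightarrow> real) \<Rightarrow> nat \<Rightarrow> 'v \<Rightarrow> 'v \<Rightarrow> real" where
  "Mprod W \<alpha> 0 = mat_id"
| "Mprod W \<alpha> (Suc t) = mat_mult (Mmat W \<alpha> t) (Mprod W \<alpha> t)"

end

theory Submission
  imports Defs
begin

lemma measure_bind_finite:
  fixes M :: "'a::finite pmf" and f :: "'a \<Rightarrow> 'b::finite pmf"
  shows "measure (bind_pmf M f) A = (\<integral>x. measure (f x) A \<partial>M)"
proof -
  have "measure (bind_pmf M f) A = (\<Sum>y\<in>A. pmf (bind_pmf M f) y)"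
    by (simp add: measure_measure_pmf_finite)
  also have "\<dots> = (\<Sum>y\<in>A. \<integral>x. pmf (f x) y \<partial>M)" by (simp add: pmf_bind)
  also have "\<dots> = (\<integral>x. (\<Sum>y\<in>A. pmf (f x) y) \<partial>M)"
    using Bochner_Integration.integral_sum[where f="\<lambda>y x. pmf (f x) y" and I=A] by (simp add: integrable_measure_pmf_finite)
  also have "\<dots> = (\<integral>x. measure (f x) A \<partial>M)"
    by (simp add: measure_measure_pmf_finite)
  finally show ?thesis .
qed

definition cpl :: "real \<Rightarrow> real \<Rightarrow> (bool \<times> bool) pmf" where
  "cpl a b = map_pmf (\<lambda>(u,v). (u \<and> v, v)) (pair_pmf (bernoulli_pmf (a/b)) (bernoulli_pmf b))"

lemma cpl_props:
  assumes "0 \<le> a" "a \<le> b" "b \<le> 1"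
  shows "map_pmf fst (cpl a b) = bernoulli_pmf a"
    "map_pmf snd (cpl a b) = bernoulli_pmf b"
    "measure (cpl a b) {z. fst z \<noteq> snd z} = b - a"
proof -
  have ab: "0 \<le> a/b" "a/b \<le> 1" using assms by (auto simp: divide_simps)
  have m: "measure (pair_pmf (bernoulli_pmf (a/b)) (bernoulli_pmf b)) (S \<times> T)
      = measure (bernoulli_pmf (a/b)) S * measure (bernoulli_pmf b) T" for S T
    by (rule measure_pmf_prob_product) auto
  have mt: "measure (bernoulli_pmf p) {True} = p" if "0 \<le> p" "p \<le> 1" for p
    using that by (simp add: measure_measure_pmf_finite)
  have mf: "measure (bernoulli_pmf p) {False} = 1 - p" if "0 \<le> p" "p \<le> 1" for p
    using that by (simp add: measure_measure_pmf_finite)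
  have key: "a / b * b = a" using assms by (cases "b = 0") auto
  show "map_pmf fst (cpl a b) = bernoulli_pmf a"
  proof (rule pmf_eqI)
    fix z :: bool
    have "pmf (map_pmf fst (cpl a b)) True = a"
    proof -
      have "pmf (map_pmf fst (cpl a b)) True = measure (cpl a b) (fst -` {True})"
        by (simp add: pmf_map)
      also have "\<dots> = measure (pair_pmf (bernoulli_pmf (a/b)) (bernoulli_pmf b)) ({True} \<times> {True})"
        unfolding cpl_def by (simp add: vimage_def case_prod_beta) (rule arg_cong[where f="measure _"], auto)
      also have "\<dots> = a" unfolding m using mt ab assms key by simp
      finally show ?thesis .
    qed
    then show "pmf (map_pmf fst (cpl a b)) z = pmf (bernoulli_pmf a) z"
      using assms by (cases z) (auto simp: pmf_False_conv_True)
  qed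
  show "map_pmf snd (cpl a b) = bernoulli_pmf b"
    unfolding cpl_def by (simp add: pmf.map_comp case_prod_beta' o_def map_snd_pair_pmf)
  have "measure (cpl a b) {z. fst z \<noteq> snd z}
     = measure (pair_pmf (bernoulli_pmf (a/b)) (bernoulli_pmf b)) ({False} \<times> {True})"
    unfolding cpl_def by simp (rule arg_cong[where f="measure _"], auto)
  also have "\<dots> = (1 - a/b) * b" unfolding m using mt mf ab assms by simp
  also have "\<dots> = b - a" using key by (simp add: algebra_simps)
  finally show "measure (cpl a b) {z. fst z \<noteq> snd z} = b - a" .
qed

definition cb :: "real \<Rightarrow> real \<Rightarrow> (bool \<times> bool) pmf" where
  "cb p q = (if p \<le> q then cpl p q else map_pmf prod.swap (cpl q p))"

lemma cb_props:
  assumes "0 \<le> p" "p \<le> 1" "0 \<le> q" "q \<le> 1"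
  shows "map_pmf fst (cb p q) = bernoulli_pmf p"
    "map_pmf snd (cb p q) = bernoulli_pmf q"
    "measure (cb p q) {z. fst z \<noteq> snd z} = \<bar>p - q\<bar>"
proof -
  show "map_pmf fst (cb p q) = bernoulli_pmf p"
    using assms cpl_props[of p q] cpl_props[of q p]
    by (auto simp: cb_def pmf.map_comp o_def)
  show "map_pmf snd (cb p q) = bernoulli_pmf q"
    using assms cpl_props[of p q] cpl_props[of q p]
    by (auto simp: cb_def pmf.map_comp o_def)
  show "measure (cb p q) {z. fst z \<noteq> snd z} = \<bar>p - q\<bar>"
  proof (cases "p \<le> q")
    case True then show ?thesis using assms cpl_props[of p q] by (simp add: cb_def)
  next
    case False
    have "measure (cb p q) {z. fst z \<noteq> snd z} = measure (cpl q p) (prod.swap -` {z. fst z \<noteq> snd z})"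
      using False by (simp add: cb_def)
    also have "prod.swap -` {z. fst z \<noteq> snd z} = {z::bool\<times>bool. fst z \<noteq> snd z}" by auto
    finally show ?thesis using False assms cpl_props[of q p] by simp
  qed
qed

definition cstep :: "('v::finite \<Rightarrow> real) \<Rightarrow> ('v \<Rightarrow> real) \<Rightarrow> (('v \<Rightarrow> bool) \<times> ('v \<Rightarrow> bool)) pmf" where
  "cstep P Q = map_pmf (\<lambda>f. (\<lambda>i. fst (f i), \<lambda>i. snd (f i))) (Pi_pmf UNIV (False, False) (\<lambda>i. cb (P i) (Q i)))"

lemma cstep_props:
  fixes P Q :: "'v::finite \<Rightarrow> real"
  assumes "\<And>i. 0 \<le> P i \<and> P i \<le> 1" "\<And>i. 0 \<le> Q i \<and> Q i \<le> 1"
  shows "map_pmf fst (cstep P Q) = Pi_pmf UNIV False (\<lambda>i. bernoulli_pmf (P i))"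
    "map_pmf snd (cstep P Q) = Pi_pmf UNIV False (\<lambda>i. bernoulli_pmf (Q i))"
    "measure (cstep P Q) {z. fst z i \<noteq> snd z i} = \<bar>P i - Q i\<bar>"
proof -
  have "Pi_pmf UNIV False (\<lambda>i. bernoulli_pmf (P i)) = Pi_pmf UNIV False (\<lambda>i. map_pmf fst (cb (P i) (Q i)))"
    using assms cb_props by simp
  also have "\<dots> = map_pmf (\<lambda>h. fst \<circ> h) (Pi_pmf UNIV (False, False) (\<lambda>i. cb (P i) (Q i)))"
    by (rule Pi_pmf_map) auto
  finally show "map_pmf fst (cstep P Q) = Pi_pmf UNIV False (\<lambda>i. bernoulli_pmf (P i))"
    by (simp add: cstep_def pmf.map_comp o_def)
  have "Pi_pmf UNIV False (\<lambda>i. bernoulli_pmf (Q i)) = Pi_pmf UNIV False (\<lambda>i. map_pmf snd (cb (P i) (Q i)))"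
    using assms cb_props by simp
  also have "\<dots> = map_pmf (\<lambda>h. snd \<circ> h) (Pi_pmf UNIV (False, False) (\<lambda>i. cb (P i) (Q i)))"
    by (rule Pi_pmf_map) auto
  finally show "map_pmf snd (cstep P Q) = Pi_pmf UNIV False (\<lambda>i. bernoulli_pmf (Q i))"
    by (simp add: cstep_def pmf.map_comp o_def)
  have "measure (cstep P Q) {z. fst z i \<noteq> snd z i}
     = measure (map_pmf (\<lambda>f. f i) (Pi_pmf UNIV (False, False) (\<lambda>i. cb (P i) (Q i)))) {z. fst z \<noteq> snd z}"
    by (simp add: cstep_def vimage_def)
  also have "\<dots> = measure (cb (P i) (Q i)) {z. fst z \<noteq> snd z}"
    by (subst Pi_pmf_component) auto
  also have "\<dots> = \<bar>P i - Q i\<bar>" using assms cb_props by simp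
  finally show "measure (cstep P Q) {z. fst z i \<noteq> snd z i} = \<bar>P i - Q i\<bar>" .
qed

fun cproc ::
  "(nat \<Rightarrow> ('v::finite \<times> 'v) set) \<Rightarrow> (nat \<Rightarrow> 'v \<Rightarrow> 'v \<Rightarrow> real) \<Rightarrow> (nat \<Rightarrow> 'v \<Rightarrow> real)
    \<Rightarrow> ('v \<Rightarrow> real) \<Rightarrow> ('v \<Rightarrow> bool) \<Rightarrow> ('v \<Rightarrow> bool) \<Rightarrow> nat \<Rightarrow> (('v \<Rightarrow> bool) \<times> ('v \<Rightarrow> bool)) pmf" where
  "cproc E W \<alpha> r x y 0 = return_pmf (x, y)"
| "cproc E W \<alpha> r x y (Suc t) = bind_pmf (cproc E W \<alpha> r x y t)
     (\<lambda>z. cstep (fail_prob E W \<alpha> r t (fst z)) (fail_prob E W \<alpha> r t (snd z)))"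

lemma fail_prob_range:
  fixes W :: "nat \<Rightarrow> 'v::finite \<Rightarrow> 'v \<Rightarrow> real"
  assumes W_nonneg: "\<And>t i j. W t i j \<ge> 0"
    and W_rowsum: "\<And>t i. (\<Sum>j\<in>UNIV. W t i j) \<le> 1"
    and alpha_range: "\<And>t i. 0 \<le> \<alpha> t i \<and> \<alpha> t i \<le> 1"
    and r_range: "\<And>i. 0 \<le> r i \<and> r i \<le> 1"
  shows "0 \<le> fail_prob E W \<alpha> r t x i \<and> fail_prob E W \<alpha> r t x i \<le> 1"
proof -
  let ?S = "\<Sum>j\<in>in_nbrs E t i. W t i j * of_bool (x j)"
  have s0: "0 \<le> ?S" using W_nonneg by (intro sum_nonneg) auto
  have "?S \<le> (\<Sum>j\<in>in_nbrs E t i. W t i j)" using W_nonneg by (intro sum_mono) auto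
  also have "\<dots> \<le> (\<Sum>j\<in>UNIV. W t i j)" using W_nonneg by (intro sum_mono2) auto
  finally have s1: "?S \<le> 1" using W_rowsum[of t i] by linarith
  have a: "0 \<le> \<alpha> t i" "\<alpha> t i \<le> 1" using alpha_range by auto
  have r: "0 \<le> r i" "r i \<le> 1" using r_range by auto
  have "0 \<le> (1 - \<alpha> t i) * r i + \<alpha> t i * ?S" using a r s0 by simp
  moreover have "(1 - \<alpha> t i) * r i + \<alpha> t i * ?S \<le> (1 - \<alpha> t i) * 1 + \<alpha> t i * 1"
    using a r s0 s1 by (intro add_mono mult_left_mono) auto
  ultimately show ?thesis by (simp add: fail_prob_def)
qed

lemma cproc_marg:
  fixes W :: "nat \<Rightarrow> 'v::finite \<Rightarrow> 'v \<Rightarrow> real"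
  assumes W_nonneg: "\<And>t i j. W t i j \<ge> 0"
    and W_rowsum: "\<And>t i. (\<Sum>j\<in>UNIV. W t i j) \<le> 1"
    and alpha_range: "\<And>t i. 0 \<le> \<alpha> t i \<and> \<alpha> t i \<le> 1"
    and r_range: "\<And>i. 0 \<le> r i \<and> r i \<le> 1"
  shows "map_pmf fst (cproc E W \<alpha> r x y t) = law E W \<alpha> r x t \<and> map_pmf snd (cproc E W \<alpha> r x y t) = law E W \<alpha> r y t"
proof (induction t)
  case 0 then show ?case by simp
next
  case (Suc t)
  note fr = fail_prob_range[OF W_nonneg W_rowsum alpha_range r_range]
  have "map_pmf fst (cproc E W \<alpha> r x y (Suc t)) = bind_pmf (cproc E W \<alpha> r x y t) (\<lambda>z. step_kernel E W \<alpha> r t (fst z))"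
    by (simp add: map_bind_pmf cstep_props(1)[OF fr fr] step_kernel_def)
  also have "\<dots> = law E W \<alpha> r x (Suc t)" using Suc by (simp flip: bind_map_pmf)
  finally have 1: "map_pmf fst (cproc E W \<alpha> r x y (Suc t)) = law E W \<alpha> r x (Suc t)" .
  have "map_pmf snd (cproc E W \<alpha> r x y (Suc t)) = bind_pmf (cproc E W \<alpha> r x y t) (\<lambda>z. step_kernel E W \<alpha> r t (snd z))"
    by (simp add: map_bind_pmf cstep_props(2)[OF fr fr] step_kernel_def)
  also have "\<dots> = law E W \<alpha> r y (Suc t)" using Suc by (simp flip: bind_map_pmf)
  finally show ?case using 1 by simp
qed

lemma fp_diff:
  fixes W :: "nat \<Rightarrow> 'v::finite \<Rightarrow> 'v \<Rightarrow> real"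
  assumes W_nonneg: "\<And>t i j. W t i j \<ge> 0"
    and alpha_range: "\<And>t i. 0 \<le> \<alpha> t i \<and> \<alpha> t i \<le> 1"
  shows "\<bar>fail_prob E W \<alpha> r t a i - fail_prob E W \<alpha> r t b i\<bar>
     \<le> (\<Sum>j\<in>UNIV. Mmat W \<alpha> t i j * of_bool (a j \<noteq> b j))"
proof -
  have a: "0 \<le> \<alpha> t i" using alpha_range by auto
  have "fail_prob E W \<alpha> r t a i - fail_prob E W \<alpha> r t b i
      = \<alpha> t i * (\<Sum>j\<in>in_nbrs E t i. W t i j * (of_bool (a j) - of_bool (b j)))"
    by (simp add: fail_prob_def algebra_simps sum_subtractf)
  then have "\<bar>fail_prob E W \<alpha> r t a i - fail_prob E W \<alpha> r t b i\<bar>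
      = \<alpha> t i * \<bar>\<Sum>j\<in>in_nbrs E t i. W t i j * (of_bool (a j) - of_bool (b j))\<bar>"
    using a by (simp add: abs_mult)
  also have "\<dots> \<le> \<alpha> t i * (\<Sum>j\<in>in_nbrs E t i. \<bar>W t i j * (of_bool (a j) - of_bool (b j))\<bar>)"
    using a by (intro mult_left_mono sum_abs) auto
  also have "\<dots> = \<alpha> t i * (\<Sum>j\<in>in_nbrs E t i. W t i j * of_bool (a j \<noteq> b j))"
    using W_nonneg by (intro arg_cong[where f="\<lambda>u. \<alpha> t i * u"] sum.cong) (auto simp: abs_mult)
  also have "\<dots> \<le> \<alpha> t i * (\<Sum>j\<in>UNIV. W t i j * of_bool (a j \<noteq> b j))"
    using a W_nonneg by (intro mult_left_mono sum_mono2) auto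
  also have "\<dots> = (\<Sum>j\<in>UNIV. Mmat W \<alpha> t i j * of_bool (a j \<noteq> b j))"
    by (simp only: Mmat_def sum_distrib_left mult.assoc)
  finally show ?thesis .
qed

lemma cproc_err:
  fixes W :: "nat \<Rightarrow> 'v::finite \<Rightarrow> 'v \<Rightarrow> real"
  assumes W_nonneg: "\<And>t i j. W t i j \<ge> 0"
    and W_rowsum: "\<And>t i. (\<Sum>j\<in>UNIV. W t i j) \<le> 1"
    and alpha_range: "\<And>t i. 0 \<le> \<alpha> t i \<and> \<alpha> t i \<le> 1"
    and r_range: "\<And>i. 0 \<le> r i \<and> r i \<le> 1"
  shows "measure (cproc E W \<alpha> r x y (Suc t)) {z. fst z i \<noteq> snd z i}
    \<le> (\<Sum>j\<in>UNIV. Mmat W \<alpha> t i j * measure (cproc E W \<alpha> r x y t) {z. fst z j \<noteq> snd z j})"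
proof -
  note fr = fail_prob_range[OF W_nonneg W_rowsum alpha_range r_range]
  let ?C = "cproc E W \<alpha> r x y t"
  have "measure (cproc E W \<alpha> r x y (Suc t)) {z. fst z i \<noteq> snd z i}
     = (\<integral>z. \<bar>fail_prob E W \<alpha> r t (fst z) i - fail_prob E W \<alpha> r t (snd z) i\<bar> \<partial>?C)"
    unfolding cproc.simps measure_bind_finite by (intro Bochner_Integration.integral_cong refl cstep_props(3)[OF fr fr])
  also have "\<dots> \<le> (\<integral>z. (\<Sum>j\<in>UNIV. Mmat W \<alpha> t i j * of_bool (fst z j \<noteq> snd z j)) \<partial>?C)"
    by (intro integral_mono integrable_measure_pmf_finite fp_diff[OF W_nonneg alpha_range]) auto
  also have "\<dots> = (\<Sum>j\<in>UNIV. (\<integral>z. Mmat W \<alpha> t i j * of_bool (fst z j \<noteq> snd z j) \<partial>?C))"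
    by (rule Bochner_Integration.integral_sum) (auto intro: integrable_measure_pmf_finite)
  also have "\<dots> = (\<Sum>j\<in>UNIV. Mmat W \<alpha> t i j * measure ?C {z. fst z j \<noteq> snd z j})"
  proof (rule sum.cong[OF refl])
    fix j
    have "(\<integral>z. Mmat W \<alpha> t i j * of_bool (fst z j \<noteq> snd z j) \<partial>?C)
        = Mmat W \<alpha> t i j * (\<integral>z. indicator {z. fst z j \<noteq> snd z j} z \<partial>?C)"
      by (simp add: indicator_def of_bool_def)
    also have "\<dots> = Mmat W \<alpha> t i j * measure ?C {z. fst z j \<noteq> snd z j}" by simp
    finally show "(\<integral>z. Mmat W \<alpha> t i j * of_bool (fst z j \<noteq> snd z j) \<partial>?C)
        = Mmat W \<alpha> t i j * measure ?C {z. fst z j \<noteq> snd z j}" .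
  qed
  finally show ?thesis .
qed

lemma Mprod_nonneg:
  fixes W :: "nat \<Rightarrow> 'v::finite \<Rightarrow> 'v \<Rightarrow> real"
  assumes W_nonneg: "\<And>t i j. W t i j \<ge> 0"
    and alpha_range: "\<And>t i. 0 \<le> \<alpha> t i \<and> \<alpha> t i \<le> 1"
  shows "0 \<le> Mprod W \<alpha> t i k"
proof (induction t arbitrary: i k)
  case 0 then show ?case by (simp add: mat_id_def)
next
  case (Suc t)
  have "0 \<le> Mmat W \<alpha> t i j" for j using W_nonneg alpha_range by (simp add: Mmat_def)
  then show ?case using Suc by (simp add: mat_mult_def sum_nonneg)
qed

lemma Mprod_row:
  "(\<Sum>k\<in>UNIV. Mprod W \<alpha> (Suc t) i k) = (\<Sum>j\<in>UNIV. Mmat W \<alpha> t i j * (\<Sum>k\<in>UNIV. Mprod W \<alpha> t j k))"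
  by (simp add: mat_mult_def sum_distrib_left) (rule sum.swap)

lemma cproc_err_bound:
  fixes W :: "nat \<Rightarrow> 'v::finite \<Rightarrow> 'v \<Rightarrow> real"
  assumes W_nonneg: "\<And>t i j. W t i j \<ge> 0"
    and W_rowsum: "\<And>t i. (\<Sum>j\<in>UNIV. W t i j) \<le> 1"
    and alpha_range: "\<And>t i. 0 \<le> \<alpha> t i \<and> \<alpha> t i \<le> 1"
    and r_range: "\<And>i. 0 \<le> r i \<and> r i \<le> 1"
  shows "measure (cproc E W \<alpha> r x y t) {z. fst z i \<noteq> snd z i} \<le> (\<Sum>k\<in>UNIV. Mprod W \<alpha> t i k)"
proof (induction t arbitrary: i)
  case 0
  have "(\<Sum>k\<in>UNIV. Mprod W \<alpha> 0 i k) = 1" by (simp add: mat_id_def)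
  then show ?case by simp
next
  case (Suc t)
  have "measure (cproc E W \<alpha> r x y (Suc t)) {z. fst z i \<noteq> snd z i}
    \<le> (\<Sum>j\<in>UNIV. Mmat W \<alpha> t i j * measure (cproc E W \<alpha> r x y t) {z. fst z j \<noteq> snd z j})"
    by (rule cproc_err[OF W_nonneg W_rowsum alpha_range r_range])
  also have "\<dots> \<le> (\<Sum>j\<in>UNIV. Mmat W \<alpha> t i j * (\<Sum>k\<in>UNIV. Mprod W \<alpha> t j k))"
    using Suc W_nonneg alpha_range by (intro sum_mono mult_left_mono) (auto simp: Mmat_def)
  also have "\<dots> = (\<Sum>k\<in>UNIV. Mprod W \<alpha> (Suc t) i k)" by (rule Mprod_row[symmetric])
  finally show ?case .
qed

lemma dTV_coupling:
  fixes C :: "('s::finite \<times> 's) pmf"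
  shows "dTV (map_pmf fst C) (map_pmf snd C) \<le> measure C {z. fst z \<noteq> snd z}"
proof -
  let ?D = "{z. fst z \<noteq> snd z}"
  have one: "measure C (fst -` S) \<le> measure C (snd -` S) + measure C ?D" for S :: "'s set" and C :: "('s \<times> 's) pmf"
  proof -
    have "fst -` S \<subseteq> snd -` S \<union> ?D" by auto
    then have "measure C (fst -` S) \<le> measure C (snd -` S \<union> ?D)"
      by (intro measure_pmf.finite_measure_mono) auto
    also have "\<dots> \<le> measure C (snd -` S) + measure C ?D"
      by (intro measure_Un_le) auto
    finally show ?thesis .
  qed
  have two: "measure C (snd -` S) \<le> measure C (fst -` S) + measure C ?D" for S :: "'s set"
  proof -
    have "snd -` S \<subseteq> fst -` S \<union> ?D" by auto
    then have "measure C (snd -` S) \<le> measure C (fst -` S \<union> ?D)"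
      by (intro measure_pmf.finite_measure_mono) auto
    also have "\<dots> \<le> measure C (fst -` S) + measure C ?D"
      by (intro measure_Un_le) auto
    finally show ?thesis .
  qed
  show ?thesis unfolding dTV_def
  proof (subst Max_le_iff)
    show "finite (range (\<lambda>S. \<bar>measure (map_pmf fst C) S - measure (map_pmf snd C) S\<bar>))" by simp
    show "range (\<lambda>S. \<bar>measure (map_pmf fst C) S - measure (map_pmf snd C) S\<bar>) \<noteq> {}" by simp
    show "\<forall>a\<in>range (\<lambda>S. \<bar>measure (map_pmf fst C) S - measure (map_pmf snd C) S\<bar>). a \<le> measure C ?D"
      using one[of C] two by (auto simp: abs_le_iff) (smt (verit))+
  qed
qed

lemma union_bound:
  fixes C :: "(('v::finite \<Rightarrow> bool) \<times> ('v \<Rightarrow> bool)) pmf"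
  shows "measure C {z. fst z \<noteq> snd z} \<le> (\<Sum>i\<in>UNIV. measure C {z. fst z i \<noteq> snd z i})"
proof -
  have e: "{z. fst z \<noteq> snd z} = (\<Union>i\<in>UNIV. {z. fst z i \<noteq> snd z i})" by auto
  show ?thesis unfolding e
    using measure_pmf.finite_measure_subadditive_finite[of UNIV "\<lambda>i. {z. fst z i \<noteq> snd z i}" C]
    by simp
qed

lemma row_le_inf_norm:
  fixes A :: "'v::finite \<Rightarrow> 'v \<Rightarrow> real"
  assumes "\<And>i k. 0 \<le> A i k"
  shows "(\<Sum>k\<in>UNIV. A i k) \<le> inf_norm A"
proof -
  have "(\<Sum>k\<in>UNIV. A i k) = (\<Sum>k\<in>UNIV. \<bar>A i k\<bar>)" using assms by simp
  also have "\<dots> \<le> inf_norm A" unfolding inf_norm_def by (intro Max_ge) auto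
  finally show ?thesis .
qed

lemma inf_norm_le:
  fixes A :: "'v::finite \<Rightarrow> 'v \<Rightarrow> real"
  assumes "\<And>i k. 0 \<le> A i k" "\<And>i. (\<Sum>k\<in>UNIV. A i k) \<le> b"
  shows "inf_norm A \<le> b"
  unfolding inf_norm_def using assms by (subst Max_le_iff) auto

lemma row_decay:
  fixes W :: "nat \<Rightarrow> 'v::finite \<Rightarrow> 'v \<Rightarrow> real"
  assumes W_nonneg: "\<And>t i j. W t i j \<ge> 0"
    and W_support: "\<And>t i j. W t i j > 0 \<Longrightarrow> (j, i) \<in> E t"
    and W_rowsum: "\<And>t i. (\<Sum>j\<in>UNIV. W t i j) \<le> 1"
    and alpha_range: "\<And>t i. 0 \<le> \<alpha> t i \<and> \<alpha> t i \<le> 1"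
    and role_persistence: "\<And>t i. pure_obligee E t i \<longleftrightarrow> pure_obligee E (Suc t) i"
    and ab: "0 < \<alpha>bar" "\<alpha>bar < 1"
    and uniform_bound: "\<And>t i. \<not> pure_obligee E t i \<Longrightarrow> \<alpha> t i \<le> \<alpha>bar"
  shows "\<forall>i. (\<Sum>k\<in>UNIV. Mprod W \<alpha> t i k) \<le> \<alpha>bar ^ (t div 2)
     \<and> (\<not> pure_obligee E 0 i \<longrightarrow> (\<Sum>k\<in>UNIV. Mprod W \<alpha> t i k) \<le> \<alpha>bar ^ (Suc t div 2))"
proof (induction t)
  case 0 then show ?case by (simp add: mat_id_def)
next
  case (Suc t)
  have pers: "pure_obligee E s i \<longleftrightarrow> pure_obligee E 0 i" for s i
    by (induction s) (use role_persistence in auto)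
  have Mn: "0 \<le> Mmat W \<alpha> t i j" for i j using W_nonneg alpha_range by (simp add: Mmat_def)
  have Msum: "(\<Sum>j\<in>UNIV. Mmat W \<alpha> t i j) \<le> \<alpha> t i" for i
  proof -
    have "(\<Sum>j\<in>UNIV. Mmat W \<alpha> t i j) = \<alpha> t i * (\<Sum>j\<in>UNIV. W t i j)"
      by (simp add: Mmat_def sum_distrib_left)
    also have "\<dots> \<le> \<alpha> t i * 1" using alpha_range W_rowsum by (intro mult_left_mono) auto
    finally show ?thesis by simp
  qed
  have p1: "Mmat W \<alpha> t i j * (\<Sum>k\<in>UNIV. Mprod W \<alpha> t j k) \<le> Mmat W \<alpha> t i j * \<alpha>bar ^ (Suc t div 2)" for i j
  proof (cases "W t i j > 0")
    case True
    then have "(j, i) \<in> E t" by (rule W_support)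
    then have "\<not> pure_obligee E 0 j" using pers[of t j] by (auto simp: pure_obligee_def)
    then show ?thesis using Suc Mn by (intro mult_left_mono) auto
  next
    case False
    then have "W t i j = 0" using W_nonneg[of t i j] by linarith
    then show ?thesis by (simp add: Mmat_def)
  qed
  have p2: "Mmat W \<alpha> t i j * (\<Sum>k\<in>UNIV. Mprod W \<alpha> t j k) \<le> Mmat W \<alpha> t i j * \<alpha>bar ^ (t div 2)" for i j
    using Suc Mn by (intro mult_left_mono) auto
  have abp: "0 \<le> \<alpha>bar ^ n" for n using ab by simp
  show ?case
  proof (intro allI conjI impI)
    fix i
    have "(\<Sum>k\<in>UNIV. Mprod W \<alpha> (Suc t) i k) \<le> (\<Sum>j\<in>UNIV. Mmat W \<alpha> t i j * \<alpha>bar ^ (Suc t div 2))"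
      unfolding Mprod_row by (intro sum_mono p1)
    also have "\<dots> = (\<Sum>j\<in>UNIV. Mmat W \<alpha> t i j) * \<alpha>bar ^ (Suc t div 2)" by (simp add: sum_distrib_right)
    also have "\<dots> \<le> 1 * \<alpha>bar ^ (Suc t div 2)"
      using Msum[of i] alpha_range[of t i] abp by (intro mult_right_mono) auto
    finally show "(\<Sum>k\<in>UNIV. Mprod W \<alpha> (Suc t) i k) \<le> \<alpha>bar ^ (Suc t div 2)" by simp
    assume np: "\<not> pure_obligee E 0 i"
    have "(\<Sum>k\<in>UNIV. Mprod W \<alpha> (Suc t) i k) \<le> (\<Sum>j\<in>UNIV. Mmat W \<alpha> t i j * \<alpha>bar ^ (t div 2))"
      unfolding Mprod_row by (intro sum_mono p2)
    also have "\<dots> = (\<Sum>j\<in>UNIV. Mmat W \<alpha> t i j) * \<alpha>bar ^ (t div 2)" by (simp add: sum_distrib_right)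
    also have "\<dots> \<le> \<alpha>bar * \<alpha>bar ^ (t div 2)"
      using Msum[of i] uniform_bound[of t i] np pers[of t i] abp by (intro mult_right_mono) auto
    also have "\<dots> = \<alpha>bar ^ (Suc (Suc t) div 2)" by simp
    finally show "(\<Sum>k\<in>UNIV. Mprod W \<alpha> (Suc t) i k) \<le> \<alpha>bar ^ (Suc (Suc t) div 2)" .
  qed
qed

theorem mainTheorem14:
  fixes E :: "nat \<Rightarrow> ('v::finite \<times> 'v) set"
    and W :: "nat \<Rightarrow> 'v \<Rightarrow> 'v \<Rightarrow> real"
    and \<alpha> :: "nat \<Rightarrow> 'v \<Rightarrow> real"
    and r :: "'v \<Rightarrow> real"
    and \<alpha>bar :: real
    and x y :: "'v \<Rightarrow> bool"
    and t :: nat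
  assumes W_nonneg: "\<And>t i j. W t i j \<ge> 0"
    and W_support: "\<And>t i j. W t i j > 0 \<Longrightarrow> (j, i) \<in> E t"
    and W_rowsum: "\<And>t i. (\<Sum>j\<in>UNIV. W t i j) \<le> 1"
    and alpha_range: "\<And>t i. 0 \<le> \<alpha> t i \<and> \<alpha> t i \<le> 1"
    and alpha_obligee: "\<And>t i. pure_obligee E t i \<Longrightarrow> \<alpha> t i = 1"
    and r_range: "\<And>i. 0 \<le> r i \<and> r i \<le> 1"
    and role_persistence: "\<And>t i. pure_obligee E t i \<longleftrightarrow> pure_obligee E (Suc t) i"
    and alphabar_range: "0 < \<alpha>bar" "\<alpha>bar < 1"
    and uniform_bound: "\<And>t i. \<not> pure_obligee E t i \<Longrightarrow> \<alpha> t i \<le> \<alpha>bar"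
  shows "dTV (law E W \<alpha> r x t) (law E W \<alpha> r y t)
           \<le> real CARD('v) * inf_norm (Mprod W \<alpha> t)
       \<and> dTV (law E W \<alpha> r x t) (law E W \<alpha> r y t)
           \<le> real CARD('v) * \<alpha>bar ^ (t div 2)"
proof -
  let ?C = "cproc E W \<alpha> r x y t"
  note marg = cproc_marg[OF W_nonneg W_rowsum alpha_range r_range, where E=E and x=x and y=y and t=t]
  note Mn = Mprod_nonneg[OF W_nonneg alpha_range]
  have "dTV (law E W \<alpha> r x t) (law E W \<alpha> r y t) \<le> measure ?C {z. fst z \<noteq> snd z}"
    using dTV_coupling[of ?C] marg by simp
  also have "\<dots> \<le> (\<Sum>i\<in>UNIV. measure ?C {z. fst z i \<noteq> snd z i})" by (rule union_bound)
  also have "\<dots> \<le> (\<Sum>i\<in>(UNIV::'v set). inf_norm (Mprod W \<alpha> t))"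
    by (intro sum_mono order.trans[OF cproc_err_bound[OF W_nonneg W_rowsum alpha_range r_range]]
        row_le_inf_norm Mn)
  also have "\<dots> = real CARD('v) * inf_norm (Mprod W \<alpha> t)" by simp
  finally have 1: "dTV (law E W \<alpha> r x t) (law E W \<alpha> r y t) \<le> real CARD('v) * inf_norm (Mprod W \<alpha> t)" .
  have "inf_norm (Mprod W \<alpha> t) \<le> \<alpha>bar ^ (t div 2)"
    using row_decay[OF W_nonneg W_support W_rowsum alpha_range role_persistence alphabar_range uniform_bound, where t=t]
    by (intro inf_norm_le Mn) auto
  then have "real CARD('v) * inf_norm (Mprod W \<alpha> t) \<le> real CARD('v) * \<alpha>bar ^ (t div 2)"
    by (intro mult_left_mono) auto
  with 1 show ?thesis by linarith
qed

end
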